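(* Let $X=\ell_p$ for some $1\le p<\infty$, or $X=c_0$, considered as a Banach algebra under coordinatewise multiplication, and let $\lambda\in\mathbb C$ with $|\lambda|>1$. Let $\lambda B(x(1),x(2),\ldots)=(\lambda x(2),\lambda x(3),\ldots)$. Then $\lambda B$ does not have any frequently hypercyclic algebra. Furthermore, no hypercyclic algebra for $\lambda B$ can contain a frequently hypercyclic vector.
   Context: For an operator $T$ on $X$, a vector $x$ is hypercyclic if its orbit $\{T^nx:n\ge0\}$ is dense; it is frequently hypercyclic if for every non-empty open $U\subset X$ the set $\{n\in\mathbb N_0:T^nx\in U\}$ has positive lower density (lower density of $A\subset\mathbb N_0$: $\liminf_{N\to\infty}\frac{\mathrm{card}(A\cap[0,N])}{N+1}$). A hypercyclic (resp. frequently hypercyclic) algebra for $T$ is a subalgebra $\mathcal A\neq\{0\}$ of $X$ such that every non-zero element of $\mathcal A$ is a hypercyclic (resp. frequently hypercyclic) vector for $T$. *)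

theory Defs
  imports "HOL-Analysis.Analysis" "HOL-Library.Liminf_Limsup" "HOL-Library.Function_Algebras"
begin

definition lp_space :: "real \<Rightarrow> (nat \<Rightarrow> complex) set" where
  "lp_space p = {x. summable (\<lambda>n. norm (x n) powr p)}"

definition lp_norm :: "real \<Rightarrow> (nat \<Rightarrow> complex) \<Rightarrow> real" where
  "lp_norm p x = (\<Sum>n. norm (x n) powr p) powr (1 / p)"

definition c0_space :: "(nat \<Rightarrow> complex) set" where
  "c0_space = {x. x \<longlonglongrightarrow> 0}"

definition c0_norm :: "(nat \<Rightarrow> complex) \<Rightarrow> real" where
  "c0_norm x = (SUP n. norm (x n))"

definition open_in_space :: "(nat \<Rightarrow> complex) set \<Rightarrow> ((nat \<Rightarrow> complex) \<Rightarrow> real)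
    \<Rightarrow> (nat \<Rightarrow> complex) set \<Rightarrow> bool" where
  "open_in_space X N U \<longleftrightarrow> U \<subseteq> X \<and>
     (\<forall>u\<in>U. \<exists>e>0. \<forall>y\<in>X. N (y - u) < e \<longrightarrow> y \<in> U)"

definition hypercyclic_vec :: "(nat \<Rightarrow> complex) set \<Rightarrow> ((nat \<Rightarrow> complex) \<Rightarrow> real)
    \<Rightarrow> ((nat \<Rightarrow> complex) \<Rightarrow> (nat \<Rightarrow> complex)) \<Rightarrow> (nat \<Rightarrow> complex) \<Rightarrow> bool" where
  "hypercyclic_vec X N T x \<longleftrightarrow> x \<in> X \<and>
     (\<forall>y\<in>X. \<forall>e>0. \<exists>n. N ((T ^^ n) x - y) < e)"

definition lower_density :: "nat set \<Rightarrow> ereal" where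
  "lower_density A = liminf (\<lambda>N. ereal (real (card (A \<inter> {0..N})) / real (N + 1)))"

definition freq_hypercyclic_vec :: "(nat \<Rightarrow> complex) set \<Rightarrow> ((nat \<Rightarrow> complex) \<Rightarrow> real)
    \<Rightarrow> ((nat \<Rightarrow> complex) \<Rightarrow> (nat \<Rightarrow> complex)) \<Rightarrow> (nat \<Rightarrow> complex) \<Rightarrow> bool" where
  "freq_hypercyclic_vec X N T x \<longleftrightarrow> x \<in> X \<and>
     (\<forall>U. open_in_space X N U \<and> U \<noteq> {} \<longrightarrow> lower_density {n. (T ^^ n) x \<in> U} > 0)"

definition subalgebra_of :: "(nat \<Rightarrow> complex) set \<Rightarrow> (nat \<Rightarrow> complex) set \<Rightarrow> bool" where
  "subalgebra_of X A \<longleftrightarrow> A \<subseteq> X \<and> 0 \<in> A \<and>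
     (\<forall>x\<in>A. \<forall>y\<in>A. x + y \<in> A) \<and>
     (\<forall>c::complex. \<forall>x\<in>A. (\<lambda>n. c * x n) \<in> A) \<and>
     (\<forall>x\<in>A. \<forall>y\<in>A. (\<lambda>n. x n * y n) \<in> A)"

definition hypercyclic_algebra where
  "hypercyclic_algebra X N T A \<longleftrightarrow> subalgebra_of X A \<and> A \<noteq> {0} \<and>
     (\<forall>x\<in>A. x \<noteq> 0 \<longrightarrow> hypercyclic_vec X N T x)"

definition freq_hypercyclic_algebra where
  "freq_hypercyclic_algebra X N T A \<longleftrightarrow> subalgebra_of X A \<and> A \<noteq> {0} \<and>
     (\<forall>x\<in>A. x \<noteq> 0 \<longrightarrow> freq_hypercyclic_vec X N T x)"

definition scaled_backward_shift :: "complex \<Rightarrow> (nat \<Rightarrow> complex) \<Rightarrow> (nat \<Rightarrow> complex)" where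
  "scaled_backward_shift c x = (\<lambda>n. c * x (Suc n))"

end

theory Submission
  imports Defs
begin


lemma orbit_formula:
  "(scaled_backward_shift c ^^ n) w = (\<lambda>j. c ^ n * w (j + n))"
  by (induction n) (auto simp: scaled_backward_shift_def fun_eq_iff)

lemma ld_empty: "lower_density {} = 0"
  by (simp add: lower_density_def zero_ereal_def[symmetric] Liminf_const)

lemma fhc_hits:
  assumes "freq_hypercyclic_vec X N T x" "open_in_space X N U" "U \<noteq> {}"
  shows "\<exists>n. (T ^^ n) x \<in> U"
proof (rule ccontr)
  assume "\<not> ?thesis"
  hence "{n. (T ^^ n) x \<in> U} = {}" by auto
  with assms show False unfolding freq_hypercyclic_vec_def by (auto simp: ld_empty)
qed

lemma open_coord0:
  assumes coord: "\<And>z j. z \<in> X \<Longrightarrow> norm (z j) \<le> N z"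
  and diff: "\<And>y u. y\<in>X \<Longrightarrow> u\<in>X \<Longrightarrow> y - u \<in> X"
  shows "open_in_space X N {z\<in>X. norm (z 0 - t) < 1}"
  unfolding open_in_space_def
proof (intro conjI ballI)
  fix u assume u: "u \<in> {z\<in>X. norm (z 0 - t) < 1}"
  show "\<exists>e>0. \<forall>y\<in>X. N (y - u) < e \<longrightarrow> y \<in> {z\<in>X. norm (z 0 - t) < 1}"
  proof (intro exI[of _ "1 - norm (u 0 - t)"] conjI ballI impI)
    show "0 < 1 - norm (u 0 - t)" using u by auto
    fix y assume y: "y \<in> X" "N (y - u) < 1 - norm (u 0 - t)"
    have "norm (y 0 - u 0) \<le> N (y - u)" using coord[OF diff[OF y(1)], of u 0] u by auto
    moreover have "norm (y 0 - t) \<le> norm (y 0 - u 0) + norm (u 0 - t)"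
      by (metis diff_add_cancel norm_triangle_ineq add_diff_eq)
    ultimately show "y \<in> {z\<in>X. norm (z 0 - t) < 1}" using y by auto
  qed
qed auto

lemma open_ball1:
  assumes coord: "\<And>z j. z \<in> X \<Longrightarrow> norm (z j) \<le> N z"
  and diff: "\<And>y u. y\<in>X \<Longrightarrow> u\<in>X \<Longrightarrow> y - u \<in> X"
  shows "open_in_space X N {z\<in>X. \<exists>s<1. \<forall>j. norm (z j) \<le> s}"
  unfolding open_in_space_def
proof (intro conjI ballI)
  fix u assume u: "u \<in> {z\<in>X. \<exists>s<1. \<forall>j. norm (z j) \<le> s}"
  then obtain s where s: "s < 1" "\<forall>j. norm (u j) \<le> s" and uX: "u \<in> X" by auto
  show "\<exists>e>0. \<forall>y\<in>X. N (y - u) < e \<longrightarrow> y \<in> {z\<in>X. \<exists>s<1. \<forall>j. norm (z j) \<le> s}"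
  proof (intro exI[of _ "(1 - s)/2"] conjI ballI impI)
    show "0 < (1 - s)/2" using s by auto
    fix y assume y: "y \<in> X" "N (y - u) < (1 - s)/2"
    have "\<forall>j. norm (y j) \<le> s + (1 - s)/2"
    proof
      fix j
      have "norm (y j - u j) \<le> N (y - u)" using coord[OF diff[OF y(1) uX], of j] by auto
      moreover have "norm (y j) \<le> norm (y j - u j) + norm (u j)"
        by (metis diff_add_cancel norm_triangle_ineq)
      ultimately show "norm (y j) \<le> s + (1 - s)/2" using y s(2)[rule_format, of j] by (simp add: field_simps)
    qed
    moreover have "s + (1 - s)/2 < 1" using s(1) by (simp add: field_simps)
    ultimately show "y \<in> {z\<in>X. \<exists>s<1. \<forall>j. norm (z j) \<le> s}" using y by blast
  qed
qed auto



lemma decay: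
  assumes coord: "\<And>z j. z \<in> X \<Longrightarrow> norm (z j) \<le> N z"
  and diff: "\<And>y u. y\<in>X \<Longrightarrow> u\<in>X \<Longrightarrow> y - u \<in> X"
  and zeroX: "0 \<in> X" and c: "norm c > 1"
  and fhc: "freq_hypercyclic_vec X N (scaled_backward_shift c) x"
  shows "\<exists>k\<ge>1. \<exists>B. \<forall>n. norm (c^n * x n ^ k) \<le> B"
proof -
  define V where "V = {z\<in>X. \<exists>s<1. \<forall>j. norm (z j) \<le> (s::real)}"
  have oV: "open_in_space X N V" unfolding V_def by (rule open_ball1[OF coord diff])
  have "0 \<in> V" unfolding V_def using zeroX by (auto intro: exI[of _ 0])
  define S where "S = {n. (scaled_backward_shift c ^^ n) x \<in> V}"
  have "lower_density S > 0" using fhc oV \<open>0 \<in> V\<close> unfolding freq_hypercyclic_vec_def S_def by blast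
  then obtain d where d0: "0 < ereal d" and dl: "ereal d < lower_density S"
    using ereal_dense2 by blast
  have d: "d > 0" using d0 by simp
  have "eventually (\<lambda>m. ereal d < ereal (real (card (S \<inter> {0..m})) / real (m + 1))) sequentially"
    using less_LiminfD[OF dl[unfolded lower_density_def]] .
  then obtain N0 where N0: "\<And>m. m \<ge> N0 \<Longrightarrow> d < real (card (S \<inter> {0..m})) / real (m + 1)"
    unfolding eventually_sequentially by auto
  have inS: "norm (c^n * x m) \<le> 1" if "n \<in> S" "n \<le> m" for n m
  proof -
    from that obtain s where s: "s < 1" "\<forall>j. norm (c ^ n * x (j + n)) \<le> s"
      unfolding S_def V_def orbit_formula by auto
    have "norm (c ^ n * x (m - n + n)) \<le> s" using s(2) by blast
    thus ?thesis using that s(1) by simp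
  qed
  have big: "\<exists>n\<in>S. n \<le> m \<and> d * real (m + 1) < real (n + 1)" if "m \<ge> N0" for m
  proof -
    define F where "F = S \<inter> {0..m}"
    have fin: "finite F" unfolding F_def by auto
    have q: "d < real (card F) / real (m + 1)" using N0[OF that] unfolding F_def .
    hence "card F > 0" using d by (cases "card F = 0") auto
    hence ne: "F \<noteq> {}" by auto
    define n where "n = Max F"
    have nF: "n \<in> F" unfolding n_def using fin ne by auto
    have "F \<subseteq> {0..n}" unfolding n_def using fin by auto
    hence "card F \<le> card {0..n}" by (intro card_mono) auto
    hence "card F \<le> n + 1" by simp
    moreover have "d * real (m + 1) < real (card F)" using q by (simp add: field_simps)
    ultimately have "d * real (m + 1) < real (n + 1)" by linarith
    thus ?thesis using nF unfolding F_def by auto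
  qed
  define k where "k = nat \<lceil>1 / d\<rceil> + 1"
  have k1: "k \<ge> 1" unfolding k_def by simp
  have kd: "real k * d \<ge> 1"
  proof -
    have "real k \<ge> 1 / d" unfolding k_def by linarith
    thus ?thesis using d by (simp add: field_simps)
  qed
  have bnd: "norm (c^m * x m ^ k) \<le> norm c ^ k" if mN: "m \<ge> N0" for m
  proof -
    obtain n where n: "n \<in> S" "n \<le> m" "d * real (m + 1) < real (n + 1)" using big[OF mN] by blast
    have "real (m + 1) \<le> real k * d * real (m + 1)" using kd by simp
    also have "\<dots> < real k * real (n + 1)" using n(3) k1
      by (metis mult.assoc mult_strict_left_mono of_nat_0_less_iff less_le_trans zero_less_one)
    finally have "m \<le> k * n + k" by (simp only: of_nat_mult[symmetric] of_nat_less_iff) (simp add: algebra_simps)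
    hence "norm c ^ m \<le> norm c ^ (k * n + k)" using c by (intro power_increasing) auto
    hence "norm c ^ m * norm (x m) ^ k \<le> norm c ^ (k * n + k) * norm (x m) ^ k"
      by (intro mult_right_mono) auto
    also have "\<dots> = norm c ^ k * (norm c ^ n * norm (x m)) ^ k"
      by (simp add: power_add power_mult_distrib power_mult[symmetric] mult.commute mult.left_commute)
    also have "\<dots> \<le> norm c ^ k * 1 ^ k"
      using inS[OF n(1) n(2)] by (intro mult_left_mono power_mono) (auto simp: norm_mult norm_power)
    finally show ?thesis by (simp add: norm_mult norm_power)
  qed
  define B where "B = norm c ^ k + (\<Sum>m<N0. norm (c^m * x m ^ k))"
  have "\<forall>m. norm (c^m * x m ^ k) \<le> B"
  proof
    fix m
    show "norm (c^m * x m ^ k) \<le> B"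
    proof (cases "m \<ge> N0")
      case True thus ?thesis using bnd[OF True] unfolding B_def
        by (smt (verit) sum_nonneg norm_ge_zero)
    next
      case False
      hence "norm (c^m * x m ^ k) \<le> (\<Sum>m<N0. norm (c^m * x m ^ k))"
        by (intro member_le_sum) auto
      thus ?thesis unfolding B_def by (smt (verit) zero_le_power norm_ge_zero)
    qed
  qed
  thus ?thesis using k1 by blast
qed



lemma pow_in:
  assumes "subalgebra_of X A" "x \<in> A"
  shows "(\<lambda>n. x n ^ Suc j) \<in> A"
proof (induction j)
  case 0 thus ?case using assms(2) by simp
next
  case (Suc j)
  have m: "\<forall>x\<in>A. \<forall>y\<in>A. (\<lambda>n. x n * y n) \<in> A" using assms(1) unfolding subalgebra_of_def by simp
  have "(\<lambda>n. x n * x n ^ Suc j) \<in> A" using bspec[OF bspec[OF m assms(2)] Suc] .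
  thus ?case by simp
qed

lemma bounded_no_hit:
  assumes "\<forall>n. norm (c^n * x n ^ k) \<le> B"
    and "\<forall>t. \<exists>n. norm (((scaled_backward_shift c ^^ n) (\<lambda>n. x n ^ k)) 0 - t) < 1"
  shows False
proof -
  obtain n where n: "norm (c^n * x n ^ k - complex_of_real (B + 1)) < 1"
    using assms(2)[rule_format, of "complex_of_real (B + 1)"] by (auto simp: orbit_formula)
  have B0: "B \<ge> 0" using assms(1)[rule_format, of 0] norm_ge_zero[of "c^0 * x 0 ^ k"] by linarith
  have "norm (complex_of_real (B + 1)) \<le> norm (c^n * x n ^ k - complex_of_real (B + 1)) + norm (c^n * x n ^ k)"
    using norm_triangle_ineq4[of "c^n * x n ^ k" "complex_of_real (B + 1)"]
      norm_minus_commute[of "c^n * x n ^ k" "complex_of_real (B + 1)"]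
      norm_triangle_ineq2[of "complex_of_real (B + 1)" "c^n * x n ^ k"] by linarith
  moreover have "norm (complex_of_real (B + 1)) = B + 1" using B0 by simp
  ultimately show False using n assms(1)[rule_format, of n] by linarith
qed

lemma abstract_main:
  fixes X :: "(nat \<Rightarrow> complex) set" and N :: "(nat \<Rightarrow> complex) \<Rightarrow> real" and c :: complex
  assumes coord: "\<And>z j. z \<in> X \<Longrightarrow> norm (z j) \<le> N z"
  and diff: "\<And>y u. y\<in>X \<Longrightarrow> u\<in>X \<Longrightarrow> y - u \<in> X"
  and single: "\<And>t. (\<lambda>j. if j = 0 then t else 0) \<in> X"
  and shift: "\<And>w. w \<in> X \<Longrightarrow> scaled_backward_shift c w \<in> X"
  and c: "norm c > 1"
  shows "(\<nexists>A. freq_hypercyclic_algebra X N (scaled_backward_shift c) A) \<and>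
         (\<forall>A. hypercyclic_algebra X N (scaled_backward_shift c) A \<longrightarrow>
              \<not> (\<exists>x\<in>A. freq_hypercyclic_vec X N (scaled_backward_shift c) x))"
proof -
  let ?T = "scaled_backward_shift c"
  have zeroX: "0 \<in> X" using single[of 0] by (simp add: zero_fun_def)
  have Ut: "open_in_space X N {z\<in>X. norm (z 0 - t) < 1} \<and> {z\<in>X. norm (z 0 - t) < 1} \<noteq> {}" for t
    using open_coord0[OF coord diff, of t] single[of t] by auto
  have fhc_hits: "\<exists>n. norm (((?T ^^ n) w) 0 - t) < 1" if "freq_hypercyclic_vec X N ?T w" for w t
    using fhc_hits[OF that, of "{z\<in>X. norm (z 0 - t) < 1}"] Ut[of t] by auto
  have iterX: "(?T ^^ n) w \<in> X" if "w \<in> X" for w n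
    by (induction n) (auto simp: that shift)
  have hc_hits: "\<exists>n. norm (((?T ^^ n) w) 0 - t) < 1" if "hypercyclic_vec X N ?T w" for w t
  proof -
    from that have wX: "w \<in> X" and h: "\<forall>y\<in>X. \<forall>e>0. \<exists>n. N ((?T ^^ n) w - y) < e"
      unfolding hypercyclic_vec_def by auto
    obtain n where n: "N ((?T ^^ n) w - (\<lambda>j. if j = 0 then t else 0)) < 1"
      using bspec[OF h single[of t], rule_format, OF zero_less_one] by blast
    have "norm (((?T ^^ n) w - (\<lambda>j. if j = 0 then t else 0)) 0) \<le> N ((?T ^^ n) w - (\<lambda>j. if j = 0 then t else 0))"
      by (intro coord diff iterX wX single)
    hence "norm (((?T ^^ n) w) 0 - t) < 1" using n by simp
    thus ?thesis by blast
  qed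
  have nz: "x \<noteq> 0" if "freq_hypercyclic_vec X N ?T x" for x
  proof
    assume "x = 0"
    with fhc_hits[OF that, of 2] show False by (auto simp: orbit_formula)
  qed
  have pw_nz: "(\<lambda>n. x n ^ k) \<noteq> 0" if xnz: "x \<noteq> 0" for x :: "nat \<Rightarrow> complex" and k
  proof -
    obtain m where "x m \<noteq> 0" using xnz by (auto simp: fun_eq_iff)
    thus ?thesis by (auto simp: fun_eq_iff)
  qed
  have decay': "\<exists>j B. \<forall>n. norm (c^n * x n ^ Suc j) \<le> B" if fx: "freq_hypercyclic_vec X N ?T x" for x
  proof -
    obtain k B where "k \<ge> 1" "\<forall>n. norm (c^n * x n ^ k) \<le> B"
      using decay[OF coord diff zeroX c fx] by blast
    moreover have "Suc (k - 1) = k" using \<open>k \<ge> 1\<close> by simp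
    ultimately show ?thesis by metis
  qed
  have P1: "\<nexists>A. freq_hypercyclic_algebra X N ?T A"
  proof
    assume "\<exists>A. freq_hypercyclic_algebra X N ?T A"
    then obtain A where sa: "subalgebra_of X A" and ne: "A \<noteq> {0}"
      and f: "\<forall>x\<in>A. x \<noteq> 0 \<longrightarrow> freq_hypercyclic_vec X N ?T x"
      unfolding freq_hypercyclic_algebra_def by auto
    have "0 \<in> A" using sa unfolding subalgebra_of_def by auto
    then obtain x where x: "x \<in> A" "x \<noteq> 0" using ne by blast
    have fx: "freq_hypercyclic_vec X N ?T x" using f x by auto
    obtain j B where B: "\<forall>n. norm (c^n * x n ^ Suc j) \<le> B" using decay'[OF fx] by blast
    have "freq_hypercyclic_vec X N ?T (\<lambda>n. x n ^ Suc j)"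
      using f pow_in[OF sa x(1)] pw_nz[OF x(2)] by blast
    from bounded_no_hit[OF B] fhc_hits[OF this] show False by blast
  qed
  have P2: "\<not> (\<exists>x\<in>A. freq_hypercyclic_vec X N ?T x)" if "hypercyclic_algebra X N ?T A" for A
  proof
    assume "\<exists>x\<in>A. freq_hypercyclic_vec X N ?T x"
    then obtain x where x: "x \<in> A" and fx: "freq_hypercyclic_vec X N ?T x" by blast
    from that have sa: "subalgebra_of X A" and h: "\<forall>x\<in>A. x \<noteq> 0 \<longrightarrow> hypercyclic_vec X N ?T x"
      unfolding hypercyclic_algebra_def by auto
    obtain j B where B: "\<forall>n. norm (c^n * x n ^ Suc j) \<le> B" using decay'[OF fx] by blast
    have "hypercyclic_vec X N ?T (\<lambda>n. x n ^ Suc j)"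
      using h pow_in[OF sa x] pw_nz[OF nz[OF fx]] by blast
    from bounded_no_hit[OF B] hc_hits[OF this] show False by blast
  qed
  from P1 P2 show ?thesis by blast
qed



lemma lp_coord:
  assumes p: "p \<ge> 1" and z: "z \<in> lp_space p"
  shows "norm (z j) \<le> lp_norm p z"
proof -
  have s: "summable (\<lambda>n. norm (z n) powr p)" using z unfolding lp_space_def by simp
  have "(\<Sum>n\<in>{j}. norm (z n) powr p) \<le> (\<Sum>n. norm (z n) powr p)"
    by (rule sum_le_suminf[OF s]) auto
  hence "norm (z j) powr p \<le> (\<Sum>n. norm (z n) powr p)" by simp
  hence "(norm (z j) powr p) powr (1/p) \<le> (\<Sum>n. norm (z n) powr p) powr (1/p)"
    using p by (intro powr_mono2) auto
  moreover have "(norm (z j) powr p) powr (1/p) = norm (z j)"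
    using p by (simp add: powr_powr)
  ultimately show ?thesis unfolding lp_norm_def by simp
qed

lemma lp_diff:
  assumes p: "p \<ge> 1" and y: "y \<in> lp_space p" and u: "u \<in> lp_space p"
  shows "y - u \<in> lp_space p"
proof -
  have sy: "summable (\<lambda>n. norm (y n) powr p)" using y unfolding lp_space_def by simp
  have su: "summable (\<lambda>n. norm (u n) powr p)" using u unfolding lp_space_def by simp
  have b: "norm (norm ((y - u) n) powr p) \<le> 2 powr p * (norm (y n) powr p + norm (u n) powr p)" for n
  proof -
    define M where "M = max (norm (y n)) (norm (u n))"
    have "norm ((y - u) n) \<le> norm (y n) + norm (u n)" by (simp add: norm_triangle_ineq4)
    also have "\<dots> \<le> 2 * M" unfolding M_def by simp
    finally have "norm ((y - u) n) powr p \<le> (2 * M) powr p" using p by (intro powr_mono2) auto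
    also have "\<dots> = 2 powr p * M powr p" using powr_mult by simp
    also have "M powr p \<le> norm (y n) powr p + norm (u n) powr p"
      unfolding M_def by (cases "norm (y n) \<le> norm (u n)") (auto simp: max_def)
    hence "2 powr p * M powr p \<le> 2 powr p * (norm (y n) powr p + norm (u n) powr p)"
      by (intro mult_left_mono) auto
    finally show ?thesis by simp
  qed
  have "summable (\<lambda>n. 2 powr p * (norm (y n) powr p + norm (u n) powr p))"
    by (intro summable_mult summable_add sy su)
  hence "summable (\<lambda>n. norm ((y - u) n) powr p)"
    by (rule summable_comparison_test'[of _ 0]) (use b in auto)
  thus ?thesis unfolding lp_space_def by simp
qed

lemma lp_single: "(\<lambda>j. if j = 0 then t else 0) \<in> lp_space p"
proof -
  have "summable (\<lambda>n. norm (if n + 1 = 0 then t else 0) powr p)" by simp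
  thus ?thesis unfolding lp_space_def using summable_iff_shift[of _ 1] by blast
qed

lemma lp_shift:
  assumes "w \<in> lp_space p"
  shows "scaled_backward_shift c w \<in> lp_space p"
proof -
  have "summable (\<lambda>n. norm (w n) powr p)" using assms unfolding lp_space_def by simp
  hence "summable (\<lambda>n. norm (w (Suc n)) powr p)" by (subst summable_Suc_iff)
  hence "summable (\<lambda>n. norm c powr p * norm (w (Suc n)) powr p)" by (rule summable_mult)
  thus ?thesis unfolding lp_space_def scaled_backward_shift_def by (simp add: norm_mult powr_mult)
qed

lemma c0_coord:
  assumes z: "z \<in> c0_space"
  shows "norm (z j) \<le> c0_norm z"
proof -
  have "convergent z" using z unfolding c0_space_def convergent_def by auto
  hence "Bseq z" by (rule convergent_imp_Bseq)
  then obtain K where "\<forall>n. norm (z n) \<le> K" unfolding Bseq_def by auto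
  hence "bdd_above (range (\<lambda>n. norm (z n)))" by (auto intro: bdd_aboveI)
  thus ?thesis unfolding c0_norm_def by (intro cSUP_upper) auto
qed

lemma c0_diff: "y \<in> c0_space \<Longrightarrow> u \<in> c0_space \<Longrightarrow> y - u \<in> c0_space"
  unfolding c0_space_def fun_diff_def using tendsto_diff[of y 0 sequentially u 0] by auto

lemma c0_single: "(\<lambda>j. if j = 0 then t else 0) \<in> c0_space"
proof -
  have "(\<lambda>j. (\<lambda>j. if j = 0 then t else 0) (Suc j)) \<longlonglongrightarrow> (0::complex)" by simp
  thus ?thesis unfolding c0_space_def using filterlim_sequentially_Suc by blast
qed

lemma c0_shift:
  assumes "w \<in> c0_space"
  shows "scaled_backward_shift c w \<in> c0_space"
proof -
  have "w \<longlonglongrightarrow> 0" using assms unfolding c0_space_def by simp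
  hence "(\<lambda>n. w (Suc n)) \<longlonglongrightarrow> 0" by (rule LIMSEQ_Suc)
  hence "(\<lambda>n. c * w (Suc n)) \<longlonglongrightarrow> 0" by (rule tendsto_mult_right_zero)
  thus ?thesis unfolding c0_space_def scaled_backward_shift_def by simp
qed

theorem corollary1p3:
  fixes X :: "(nat \<Rightarrow> complex) set" and N :: "(nat \<Rightarrow> complex) \<Rightarrow> real" and c :: complex
  assumes "(\<exists>p::real. 1 \<le> p \<and> X = lp_space p \<and> N = lp_norm p) \<or> (X = c0_space \<and> N = c0_norm)"
    and "norm c > 1"
  shows "(\<nexists>A. freq_hypercyclic_algebra X N (scaled_backward_shift c) A) \<and>
         (\<forall>A. hypercyclic_algebra X N (scaled_backward_shift c) A \<longrightarrow>
              \<not> (\<exists>x\<in>A. freq_hypercyclic_vec X N (scaled_backward_shift c) x))"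
  using assms(1)
proof
  assume "\<exists>p::real. 1 \<le> p \<and> X = lp_space p \<and> N = lp_norm p"
  then obtain p where p: "1 \<le> p" "X = lp_space p" "N = lp_norm p" by blast
  show ?thesis unfolding p(2,3)
    by (rule abstract_main[OF lp_coord[OF p(1)] lp_diff[OF p(1)] lp_single lp_shift assms(2)])
next
  assume q: "X = c0_space \<and> N = c0_norm"
  show ?thesis unfolding q[THEN conjunct1] q[THEN conjunct2]
    by (rule abstract_main[OF c0_coord c0_diff c0_single c0_shift assms(2)])
qed


end
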